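(* Let $n,d,d_k$ be positive integers, $X\in\mathbb{R}^{n\times d}$, $W_Q,W_K\in\mathbb{R}^{d\times d_k}$, $E\in\mathbb{R}^{n\times n}$, and let $P\in\mathbb{R}^{d\times d}$ be an orthogonal projector. Put $B=W_QW_K^\top$, $X_P=XP$, $G_Q=X^\top E X W_K/\sqrt{d_k}$, $G_K=X^\top E^\top X W_Q/\sqrt{d_k}$, and for $\eta_Q,\eta_K\ge0$ let $B^+=(W_Q-\eta_QG_Q)(W_K-\eta_KG_K)^\top$ and $\Delta Z_P=X_P P(B^+-B)P X_P^\top/\sqrt{d_k}$. Suppose there are constants $\lambda_Q,\lambda_K\ge0$ such that $$\|XW_SW_S^\top P\|_F\le\lambda_S\|X_P\|_F\|W_S\|_{\mathrm{op}}^2,\qquad S\in\{Q,K\}.$$ Then $$\|\Delta Z_P\|_F\le\frac{\|X_P\|_{\mathrm{op}}^2\|X_P\|_F^2\|E\|_{\mathrm{op}}}{d_k}\Big(\eta_Q\lambda_K\|W_K\|_{\mathrm{op}}^2+\eta_K\lambda_Q\|W_Q\|_{\mathrm{op}}^2\Big)+R_2,$$ where $R_2=\eta_Q\eta_K\|X_P\|_{\mathrm{op}}^2\|X_P\|_F^2\|E\|_{\mathrm{op}}^2\|XW_K\|_F\|XW_Q\|_F/d_k^{3/2}$. In particular (using $\|X_P\|_{\mathrm{op}}\le\|X_P\|_F$), the first-order part of $\|\Delta Z_P\|_F$ is at most $\frac{\|X_P\|_F^4\|E\|_{\mathrm{op}}}{d_k}\big(\eta_Q\lambda_K\|W_K\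|_{\mathrm{op}}^2+\eta_K\lambda_Q\|W_Q\|_{\mathrm{op}}^2\big)$.
   Context: $\|\cdot\|_F$ is the Frobenius norm, $\|\cdot\|_{\mathrm{op}}$ the spectral norm; an orthogonal projector satisfies $P=P^\top=P^2$. *)

theory Defs
  imports "HOL-Analysis.Analysis"
begin

definition frob_norm :: "real^'n^'m \<Rightarrow> real" where
  "frob_norm A = sqrt (\<Sum>i\<in>UNIV. \<Sum>j\<in>UNIV. (A $ i $ j)\<^sup>2)"

definition op_norm :: "real^'n^'m \<Rightarrow> real" where
  "op_norm A = onorm (\<lambda>x. A *v x)"

definition orth_projector :: "real^'n^'n \<Rightarrow> bool" where
  "orth_projector P \<longleftrightarrow> transpose P = P \<and> P ** P = P"

end

theory Submission
  imports Defs
begin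

lemma frob_eq: "frob_norm (A::real^'n^'m) = norm A"
  unfolding frob_norm_def norm_eq_sqrt_inner inner_vec_def by (simp add: power2_eq_square)

lemma norm_sq_rows: "(norm (A::real^'n^'m))^2 = (\<Sum>i\<in>UNIV. (norm (A$i))^2)"
  by (simp add: norm_vec_def L2_set_def sum_nonneg)

lemma norm_sq_vec: "(norm (v::real^'n))^2 = (\<Sum>i\<in>UNIV. (v$i)^2)"
  by (simp add: norm_vec_def L2_set_def sum_nonneg)

lemma norm_transpose: "norm (transpose (A::real^'n^'m)) = norm A"
  unfolding frob_eq[symmetric] frob_norm_def transpose_def
  by (simp, subst sum.swap, rule refl)

lemma op_mv: "norm (A *v x) \<le> op_norm (A::real^'n^'m) * norm x"
  unfolding op_norm_def by (rule onorm) simp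

lemma op_nonneg: "0 \<le> op_norm (A::real^'n^'m)"
  unfolding op_norm_def by (rule onorm_pos_le) simp

lemma op_le_frob: "op_norm (A::real^'n^'m) \<le> norm A"
  unfolding op_norm_def
proof (rule onorm_le)
  fix x :: "real^'n"
  have "(norm (A *v x))^2 = (\<Sum>i\<in>UNIV. (inner (A$i) x)^2)"
    by (simp add: norm_sq_vec matrix_vector_mul_component)
  also have "\<dots> \<le> (\<Sum>i\<in>UNIV. (norm (A$i))^2 * (norm x)^2)"
  proof (rule sum_mono)
    fix i
    have "\<bar>inner (A$i) x\<bar> \<le> norm (A$i) * norm x" by (rule Cauchy_Schwarz_ineq2)
    then have "\<bar>inner (A$i) x\<bar>^2 \<le> (norm (A$i) * norm x)^2"
      by (rule power_mono) simp
    then show "(inner (A$i) x)^2 \<le> (norm (A$i))^2 * (norm x)^2"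
      by (simp add: power_mult_distrib)
  qed
  also have "\<dots> = (norm A * norm x)^2"
    by (simp add: norm_sq_rows power_mult_distrib sum_distrib_right)
  finally show "norm (A *v x) \<le> norm A * norm x"
    by (rule power2_le_imp_le) simp
qed

lemma frob_mul_left: "norm ((A::real^'n^'m) ** (B::real^'p^'n)) \<le> op_norm A * norm B"
proof -
  have col: "transpose (A**B) $ j = A *v (transpose B $ j)" for j
    by (simp add: transpose_def matrix_matrix_mult_def matrix_vector_mult_def vec_eq_iff mult.commute)
  have "(norm (A ** B))^2 = (\<Sum>j\<in>UNIV. (norm (A *v (transpose B $ j)))^2)"
    by (simp add: norm_transpose[symmetric, of "A**B"] norm_sq_rows col del: norm_transpose)
  also have "\<dots> \<le> (\<Sum>j\<in>UNIV. (op_norm A * norm (transpose B $ j))^2)"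
    by (intro sum_mono power_mono op_mv) simp
  also have "\<dots> = (op_norm A)^2 * (\<Sum>j\<in>UNIV. (norm (transpose B $ j))^2)"
    by (simp add: power_mult_distrib sum_distrib_left)
  also have "\<dots> = (op_norm A * norm B)^2"
    by (simp only: norm_sq_rows[of "transpose B", symmetric] norm_transpose power_mult_distrib)
  finally show ?thesis
    by (rule power2_le_imp_le) (simp add: op_nonneg)
qed

lemma frob_mul_right: "norm ((A::real^'n^'m) ** (B::real^'p^'n)) \<le> norm A * op_norm (transpose B)"
proof -
  have "norm (A ** B) = norm (transpose B ** transpose A)"
    by (metis matrix_transpose_mul norm_transpose)
  also have "\<dots> \<le> op_norm (transpose B) * norm (transpose A)" by (rule frob_mul_left)
  finally show ?thesis by (simp add: norm_transpose mult.commute)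
qed

lemma frob_mul: "norm ((A::real^'n^'m) ** (B::real^'p^'n)) \<le> norm A * norm B"
  by (meson frob_mul_left op_le_frob mult_right_mono norm_ge_zero order_trans)

lemma op_mul: "op_norm ((A::real^'n^'m) ** (B::real^'p^'n)) \<le> op_norm A * op_norm B"
proof -
  have "(\<lambda>x. (A ** B) *v x) = (\<lambda>x. A *v x) \<circ> (\<lambda>x. B *v x)"
    by (simp add: o_def matrix_vector_mul_assoc)
  then show ?thesis unfolding op_norm_def
    by (metis onorm_compose matrix_vector_mul_bounded_linear)
qed

lemma op_transpose: "op_norm (transpose (A::real^'n^'m)) \<le> op_norm A"
  unfolding op_norm_def[of "transpose A"]
proof (rule onorm_le)
  fix y :: "real^'m"
  let ?z = "transpose A *v y"
  have "(norm ?z)^2 = inner ?z ?z" by (simp add: power2_norm_eq_inner)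
  also have "\<dots> = inner y (A *v ?z)"
    by (simp only: transpose_matrix_vector dot_lmul_matrix)
  also have "\<dots> \<le> norm y * norm (A *v ?z)" by (rule norm_cauchy_schwarz)
  also have "\<dots> \<le> norm y * (op_norm A * norm ?z)"
    by (intro mult_left_mono op_mv) simp
  finally have h: "(norm ?z)^2 \<le> op_norm A * norm y * norm ?z" by (simp add: mult_ac)
  show "norm ?z \<le> op_norm A * norm y"
  proof (cases "norm ?z = 0")
    case True then show ?thesis using op_nonneg[of A] by simp
  next
    case False
    then have "0 < norm ?z" by simp
    from h have "norm ?z * norm ?z \<le> (op_norm A * norm y) * norm ?z"
      unfolding power2_eq_square .
    then show ?thesis using \<open>0 < norm ?z\<close> by (rule mult_right_le_imp_le)
  qed
qed


lemma transpose_diff: "transpose ((A::real^'n^'m) - B) = transpose A - transpose B"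
  by (simp add: transpose_def vec_eq_iff)

lemma matrix_diff_ldistrib: "(A::real^'n^'m) ** (B - C) = A ** B - A ** C"
  by (simp add: matrix_matrix_mult_def vec_eq_iff sum_subtractf algebra_simps)

lemma matrix_diff_rdistrib: "((A::real^'n^'m) - B) ** C = A ** C - B ** C"
  by (simp add: matrix_matrix_mult_def vec_eq_iff sum_subtractf algebra_simps)

lemma matrix_add_rdistrib: "((A::real^'n^'m) + B) ** C = A ** C + B ** C"
  by (simp add: matrix_matrix_mult_def vec_eq_iff sum.distrib algebra_simps)

lemma matrix_neg_left: "(- (A::real^'n^'m)) ** B = - (A ** B)"
  by (simp add: matrix_matrix_mult_def vec_eq_iff sum_negf)

lemma matrix_neg_right: "(A::real^'n^'m) ** (- B) = - (A ** B)"
  by (simp add: matrix_matrix_mult_def vec_eq_iff sum_negf)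

lemma norm3: "norm (u - v + w) \<le> norm u + norm v + norm (w::'a::real_normed_vector)"
proof -
  have "norm (u - v + w) \<le> norm (u - v) + norm w" by (rule norm_triangle_ineq)
  also have "norm (u - v) \<le> norm u + norm v" by (rule norm_triangle_ineq4)
  finally show ?thesis by simp
qed

lemma scaleR_mult_left: "((k::real) *\<^sub>R (A::real^'n^'m)) ** B = k *\<^sub>R (A ** B)"
  by (simp add: scalar_matrix_assoc)

lemma scaleR_mult_right: "(A::real^'n^'m) ** ((k::real) *\<^sub>R B) = k *\<^sub>R (A ** B)"
  by (simp add: matrix_matrix_mult_def vec_eq_iff sum_distrib_left mult_ac)

lemma test1:
  fixes WQ WK Q0 K0 :: "real^'k^'d" and a b s :: real
  shows "(WQ - a *\<^sub>R (s *\<^sub>R Q0)) ** transpose (WK - b *\<^sub>R (s *\<^sub>R K0)) - WQ ** transpose WK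
     = - (a * s) *\<^sub>R (Q0 ** transpose WK) - (b * s) *\<^sub>R (WQ ** transpose K0) + (a * b * s * s) *\<^sub>R (Q0 ** transpose K0)"
  by (simp add: transpose_diff transpose_scalar matrix_diff_ldistrib matrix_diff_rdistrib scaleR_mult_left scaleR_mult_right algebra_simps)

lemma test2:
  fixes X :: "real^'d^'n" and WQ WK :: "real^'k^'d" and E :: "real^'n^'n"
    and P :: "real^'d^'d"
  assumes PT: "transpose P = P" and PP: "P ** P = P"
  shows "(X ** P) ** ((transpose X ** E ** X ** WK) ** transpose WK) ** transpose (X ** P)
     = (X ** P) ** transpose (X ** P) ** E ** (X ** WK ** transpose WK ** P) ** transpose (X ** P)"
    "(X ** P) ** (WQ ** transpose (transpose X ** transpose E ** X ** WQ)) ** transpose (X ** P)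
     = (X ** P) ** transpose (X ** WQ ** transpose WQ ** P) ** E ** (X ** P) ** transpose (X ** P)"
    "(X ** P) ** ((transpose X ** E ** X ** WK) ** transpose (transpose X ** transpose E ** X ** WQ)) ** transpose (X ** P)
     = (X ** P) ** transpose (X ** P) ** E ** (X ** WK) ** transpose (X ** WQ) ** E ** (X ** P) ** transpose (X ** P)"
proof -
  have PP2: "A ** P ** P = A ** P" for A :: "real^'d^'m"
    by (metis PP matrix_mul_assoc)
  show "(X ** P) ** ((transpose X ** E ** X ** WK) ** transpose WK) ** transpose (X ** P)
     = (X ** P) ** transpose (X ** P) ** E ** (X ** WK ** transpose WK ** P) ** transpose (X ** P)"
    by (simp add: matrix_transpose_mul PT matrix_mul_assoc PP2)
  show "(X ** P) ** (WQ ** transpose (transpose X ** transpose E ** X ** WQ)) ** transpose (X ** P)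
     = (X ** P) ** transpose (X ** WQ ** transpose WQ ** P) ** E ** (X ** P) ** transpose (X ** P)"
    by (simp add: matrix_transpose_mul PT matrix_mul_assoc PP2)
  show "(X ** P) ** ((transpose X ** E ** X ** WK) ** transpose (transpose X ** transpose E ** X ** WQ)) ** transpose (X ** P)
     = (X ** P) ** transpose (X ** P) ** E ** (X ** WK) ** transpose (X ** WQ) ** E ** (X ** P) ** transpose (X ** P)"
    by (simp add: matrix_transpose_mul PT matrix_mul_assoc PP2)
qed


theorem corollary2:
  fixes X :: "real^'d^'n" and WQ WK :: "real^'k^'d" and E :: "real^'n^'n"
    and P :: "real^'d^'d" and etaQ etaK lamQ lamK :: real
  assumes P: "orth_projector P"
    and etaQ: "etaQ \<ge> 0" and etaK: "etaK \<ge> 0"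
    and lamQ: "lamQ \<ge> 0" and lamK: "lamK \<ge> 0"
    and hQ: "frob_norm (X ** WQ ** transpose WQ ** P) \<le> lamQ * frob_norm (X ** P) * (op_norm WQ)\<^sup>2"
    and hK: "frob_norm (X ** WK ** transpose WK ** P) \<le> lamK * frob_norm (X ** P) * (op_norm WK)\<^sup>2"
  shows
   "let dk = real CARD('k); B = WQ ** transpose WK; XP = X ** P;
        GQ = (1 / sqrt dk) *\<^sub>R (transpose X ** E ** X ** WK);
        GK = (1 / sqrt dk) *\<^sub>R (transpose X ** transpose E ** X ** WQ);
        Bplus = (WQ - etaQ *\<^sub>R GQ) ** transpose (WK - etaK *\<^sub>R GK);
        DZ = (1 / sqrt dk) *\<^sub>R (XP ** P ** (Bplus - B) ** P ** transpose XP);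
        R2 = etaQ * etaK * (op_norm XP)\<^sup>2 * (frob_norm XP)\<^sup>2 * (op_norm E)\<^sup>2
               * frob_norm (X ** WK) * frob_norm (X ** WQ) / dk powr (3/2);
        first = (op_norm XP)\<^sup>2 * (frob_norm XP)\<^sup>2 * op_norm E / dk
               * (etaQ * lamK * (op_norm WK)\<^sup>2 + etaK * lamQ * (op_norm WQ)\<^sup>2)
    in frob_norm DZ \<le> first + R2
       \<and> first \<le> (frob_norm XP)^4 * op_norm E / dk
               * (etaQ * lamK * (op_norm WK)\<^sup>2 + etaK * lamQ * (op_norm WQ)\<^sup>2)"
  proof -
  define dk where "dk = real CARD('k)"
  define s where "s = 1 / sqrt dk"
  define XP where "XP = X ** P"
  define MQ where "MQ = X ** WQ ** transpose WQ ** P"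
  define MK where "MK = X ** WK ** transpose WK ** P"
  define Q0 where "Q0 = transpose X ** E ** X ** WK"
  define K0 where "K0 = transpose X ** transpose E ** X ** WQ"
  define T1 where "T1 = XP ** transpose XP ** E ** MK ** transpose XP"
  define T2 where "T2 = XP ** transpose MQ ** E ** XP ** transpose XP"
  define T3 where "T3 = XP ** transpose XP ** E ** (X ** WK) ** transpose (X ** WQ) ** E ** XP ** transpose XP"
  define oX where "oX = op_norm XP"
  define F where "F = norm XP"
  define oE where "oE = op_norm E"
  define wQ where "wQ = op_norm WQ"
  define wK where "wK = op_norm WK"
  define NQ where "NQ = norm (X ** WQ)"
  define NK where "NK = norm (X ** WK)"
  have PT: "transpose P = P" and PP: "P ** P = P" using P by (auto simp: orth_projector_def)
  have dk_pos: "dk > 0" unfolding dk_def by simp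
  have s2: "s * s = 1 / dk" unfolding s_def using dk_pos by (simp add: divide_simps)
  have s3: "s * s * s = 1 / dk powr (3/2)"
  proof -
    have "dk powr (3/2) = dk powr (1 + 1/2)" by simp
    also have "\<dots> = dk powr 1 * dk powr (1/2)" by (rule powr_add)
    also have "\<dots> = dk * sqrt dk" using dk_pos by (simp add: powr_half_sqrt)
    finally show ?thesis unfolding s_def using dk_pos by (simp add: divide_simps)
  qed
  have PP2: "A ** P ** P = A ** P" for A :: "real^'d^'m"
    by (metis PP matrix_mul_assoc)
  have XPP: "XP ** P = XP" unfolding XP_def by (rule PP2)
  have PXPT: "P ** transpose XP = transpose XP"
    unfolding XP_def by (simp add: matrix_transpose_mul PT PP matrix_mul_assoc)
  have e0: "(WQ - etaQ *\<^sub>R (s *\<^sub>R Q0)) ** transpose (WK - etaK *\<^sub>R (s *\<^sub>R K0)) - WQ ** transpose WK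
     = - (etaQ * s) *\<^sub>R (Q0 ** transpose WK) - (etaK * s) *\<^sub>R (WQ ** transpose K0) + (etaQ * etaK * s * s) *\<^sub>R (Q0 ** transpose K0)"
    by (rule test1)
  have e1: "XP ** (Q0 ** transpose WK) ** transpose XP = T1"
    unfolding XP_def Q0_def T1_def MK_def by (rule test2(1)[OF PT PP])
  have e2: "XP ** (WQ ** transpose K0) ** transpose XP = T2"
    unfolding XP_def K0_def T2_def MQ_def by (rule test2(2)[OF PT PP])
  have e3: "XP ** (Q0 ** transpose K0) ** transpose XP = T3"
    unfolding XP_def Q0_def K0_def T3_def by (rule test2(3)[OF PT PP])
  define D where "D = (WQ - etaQ *\<^sub>R (s *\<^sub>R Q0)) ** transpose (WK - etaK *\<^sub>R (s *\<^sub>R K0)) - WQ ** transpose WK"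
  have DZ: "s *\<^sub>R (XP ** P ** D ** P ** transpose XP)
      = - (etaQ * s * s) *\<^sub>R T1 - (etaK * s * s) *\<^sub>R T2 + (etaQ * etaK * s * s * s) *\<^sub>R T3"
  proof -
    have "XP ** P ** D ** P ** transpose XP = XP ** D ** transpose XP"
      by (metis XPP PXPT matrix_mul_assoc)
    also have "\<dots> = - (etaQ * s) *\<^sub>R T1 - (etaK * s) *\<^sub>R T2 + (etaQ * etaK * s * s) *\<^sub>R T3"
      unfolding D_def e0 e1[symmetric] e2[symmetric] e3[symmetric]
      by (simp add: matrix_diff_ldistrib matrix_diff_rdistrib matrix_add_ldistrib matrix_add_rdistrib
          scaleR_mult_left scaleR_mult_right matrix_neg_left matrix_neg_right)
    finally have h: "XP ** P ** D ** P ** transpose XP = - (etaQ * s) *\<^sub>R T1 - (etaK * s) *\<^sub>R T2 + (etaQ * etaK * s * s) *\<^sub>R T3" .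
    show ?thesis unfolding h by (simp add: scaleR_diff_right scaleR_add_right mult_ac)
  qed
  have oF: "op_norm (transpose XP) \<le> F"
    using op_le_frob[of "transpose XP"] by (simp add: F_def norm_transpose)
  have oX_nn: "0 \<le> oX" unfolding oX_def by (rule op_nonneg)
  have F_nn: "0 \<le> F" unfolding F_def by simp
  have oE_nn: "0 \<le> oE" unfolding oE_def by (rule op_nonneg)
  have oEt: "op_norm (transpose E) \<le> oE" unfolding oE_def by (rule op_transpose)
  have hQ': "norm MQ \<le> lamQ * F * wQ^2"
    using hQ unfolding MQ_def F_def XP_def wQ_def frob_eq .
  have hK': "norm MK \<le> lamK * F * wK^2"
    using hK unfolding MK_def F_def XP_def wK_def frob_eq .
  have MQ_nn: "0 \<le> lamQ * F * wQ^2" using hQ' norm_ge_zero order_trans by blast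
  have MK_nn: "0 \<le> lamK * F * wK^2" using hK' norm_ge_zero order_trans by blast
  have opXXE: "op_norm (XP ** transpose XP ** E) \<le> oX * F * oE"
  proof -
    have "op_norm (XP ** transpose XP ** E) \<le> op_norm (XP ** transpose XP) * oE"
      unfolding oE_def by (rule op_mul)
    also have "\<dots> \<le> (oX * F) * oE"
    proof (intro mult_right_mono oE_nn)
      have "op_norm (XP ** transpose XP) \<le> oX * op_norm (transpose XP)"
        unfolding oX_def by (rule op_mul)
      also have "\<dots> \<le> oX * F" by (intro mult_left_mono oF oX_nn)
      finally show "op_norm (XP ** transpose XP) \<le> oX * F" .
    qed
    finally show ?thesis .
  qed
  have b1: "norm T1 \<le> oX^2 * F^2 * oE * (lamK * wK^2)"
  proof -
    have "norm T1 \<le> norm (XP ** transpose XP ** E ** MK) * oX"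
      unfolding T1_def oX_def using frob_mul_right[of "XP ** transpose XP ** E ** MK" "transpose XP"]
      by simp
    also have "\<dots> \<le> ((oX * F * oE) * (lamK * F * wK^2)) * oX"
    proof (intro mult_right_mono oX_nn)
      have "norm (XP ** transpose XP ** E ** MK) \<le> op_norm (XP ** transpose XP ** E) * norm MK"
        by (rule frob_mul_left)
      also have "\<dots> \<le> (oX * F * oE) * (lamK * F * wK^2)"
        by (intro mult_mono opXXE hK' op_nonneg norm_ge_zero) (use oX_nn F_nn oE_nn in simp)
      finally show "norm (XP ** transpose XP ** E ** MK) \<le> (oX * F * oE) * (lamK * F * wK^2)" .
    qed
    finally show ?thesis by (simp add: power2_eq_square mult_ac)
  qed
  have b2: "norm T2 \<le> oX^2 * F^2 * oE * (lamQ * wQ^2)"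
  proof -
    have "norm T2 \<le> norm (XP ** transpose MQ ** E ** XP) * oX"
      unfolding T2_def oX_def using frob_mul_right[of "XP ** transpose MQ ** E ** XP" "transpose XP"]
      by simp
    also have "\<dots> \<le> ((oX * (lamQ * F * wQ^2)) * oE * F) * oX"
    proof (intro mult_right_mono oX_nn)
      have "norm (XP ** transpose MQ ** E ** XP) \<le> norm (XP ** transpose MQ ** E) * op_norm (transpose XP)"
        by (rule frob_mul_right)
      also have "\<dots> \<le> ((oX * (lamQ * F * wQ^2)) * oE) * F"
      proof (intro mult_mono oF norm_ge_zero op_nonneg)
        have "norm (XP ** transpose MQ ** E) \<le> norm (XP ** transpose MQ) * op_norm (transpose E)"
          by (rule frob_mul_right)
        also have "\<dots> \<le> (oX * (lamQ * F * wQ^2)) * oE"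
        proof (intro mult_mono oEt norm_ge_zero op_nonneg)
          have "norm (XP ** transpose MQ) \<le> oX * norm (transpose MQ)"
            unfolding oX_def by (rule frob_mul_left)
          also have "\<dots> \<le> oX * (lamQ * F * wQ^2)"
            using hQ' oX_nn by (simp add: norm_transpose mult_left_mono)
          finally show "norm (XP ** transpose MQ) \<le> oX * (lamQ * F * wQ^2)" .
          show "0 \<le> oX * (lamQ * F * wQ^2)" using oX_nn MQ_nn by simp
        qed
        finally show "norm (XP ** transpose MQ ** E) \<le> oX * (lamQ * F * wQ^2) * oE" .
        show "0 \<le> oX * (lamQ * F * wQ\<^sup>2) * oE" using oX_nn MQ_nn oE_nn by simp
      qed
      finally show "norm (XP ** transpose MQ ** E ** XP) \<le> ((oX * (lamQ * F * wQ^2)) * oE) * F" .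
    qed
    finally show ?thesis by (simp add: power2_eq_square mult_ac)
  qed
  have b3: "norm T3 \<le> oX^2 * F^2 * oE^2 * NK * NQ"
  proof -
    let ?A = "XP ** transpose XP ** E ** (X ** WK)"
    let ?B = "?A ** transpose (X ** WQ)"
    let ?C = "?B ** E"
    let ?D = "?C ** XP"
    have "norm T3 \<le> norm ?D * oX"
      unfolding T3_def oX_def using frob_mul_right[of ?D "transpose XP"] by simp
    also have "\<dots> \<le> ((((oX * F * oE) * NK) * NQ) * oE * F) * oX"
    proof (intro mult_right_mono oX_nn)
      have a: "norm ?A \<le> (oX * F * oE) * NK"
        unfolding NK_def
        by (rule order_trans[OF frob_mul_left]) (intro mult_right_mono opXXE norm_ge_zero)
      have b: "norm ?B \<le> ((oX * F * oE) * NK) * NQ"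
      proof -
        have "norm ?B \<le> norm ?A * op_norm (X ** WQ)"
          using frob_mul_right[of ?A "transpose (X ** WQ)"] by simp
        also have "\<dots> \<le> ((oX * F * oE) * NK) * NQ"
          unfolding NQ_def by (intro mult_mono a op_le_frob op_nonneg) (use oX_nn F_nn oE_nn NK_def in simp)
        finally show ?thesis .
      qed
      have c: "norm ?C \<le> ((oX * F * oE) * NK) * NQ * oE"
        by (rule order_trans[OF frob_mul_right]) (intro mult_mono b oEt op_nonneg, use oX_nn F_nn oE_nn NK_def NQ_def in simp)
      show "norm ?D \<le> ((((oX * F * oE) * NK) * NQ) * oE * F)"
        by (rule order_trans[OF frob_mul_right]) (intro mult_mono c oF op_nonneg, use oX_nn F_nn oE_nn NK_def NQ_def in simp)
    qed
    finally show ?thesis by (simp add: power2_eq_square mult_ac)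
  qed
  have main: "norm (s *\<^sub>R (XP ** P ** D ** P ** transpose XP))
     \<le> oX^2 * F^2 * oE / dk * (etaQ * lamK * wK^2 + etaK * lamQ * wQ^2)
        + etaQ * etaK * oX^2 * F^2 * oE^2 * NK * NQ / dk powr (3/2)"
  proof -
    have "norm (s *\<^sub>R (XP ** P ** D ** P ** transpose XP))
       \<le> norm (- (etaQ * s * s) *\<^sub>R T1) + norm ((etaK * s * s) *\<^sub>R T2) + norm ((etaQ * etaK * s * s * s) *\<^sub>R T3)"
      unfolding DZ by (rule norm3)
    also have "\<dots> = (etaQ / dk) * norm T1 + (etaK / dk) * norm T2 + (etaQ * etaK / dk powr (3/2)) * norm T3"
    proof -
      have s_nn: "0 \<le> s" unfolding s_def using dk_pos by simp
      have c1: "0 \<le> etaQ * s * s" using etaQ s_nn by simp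
      have c2: "0 \<le> etaK * s * s" using etaK s_nn by simp
      have c3: "0 \<le> etaQ * etaK * s * s * s" using etaQ etaK s_nn by simp
      have "norm (- (etaQ * s * s) *\<^sub>R T1) + norm ((etaK * s * s) *\<^sub>R T2) + norm ((etaQ * etaK * s * s * s) *\<^sub>R T3)
        = (etaQ * (s * s)) * norm T1 + (etaK * (s * s)) * norm T2 + (etaQ * etaK * (s * s * s)) * norm T3"
        using c1 c2 c3 by (simp add: mult.assoc)
      also have "\<dots> = (etaQ / dk) * norm T1 + (etaK / dk) * norm T2 + (etaQ * etaK / dk powr (3/2)) * norm T3"
        by (simp only: s3, simp only: s2, simp)
      finally show ?thesis .
    qed
    also have "\<dots> \<le> (etaQ / dk) * (oX^2 * F^2 * oE * (lamK * wK^2)) + (etaK / dk) * (oX^2 * F^2 * oE * (lamQ * wQ^2))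
        + (etaQ * etaK / dk powr (3/2)) * (oX^2 * F^2 * oE^2 * NK * NQ)"
      using etaQ etaK dk_pos
      by (intro add_mono mult_left_mono b1 b2 b3) simp_all
    also have "\<dots> = oX^2 * F^2 * oE / dk * (etaQ * lamK * wK^2 + etaK * lamQ * wQ^2)
        + etaQ * etaK * oX^2 * F^2 * oE^2 * NK * NQ / dk powr (3/2)"
      by (simp add: field_simps add_divide_distrib)
    finally show ?thesis .
  qed
  have second: "oX^2 * F^2 * oE / dk * (etaQ * lamK * wK^2 + etaK * lamQ * wQ^2)
      \<le> F^4 * oE / dk * (etaQ * lamK * wK^2 + etaK * lamQ * wQ^2)"
  proof (rule mult_right_mono)
    have "oX \<le> F" unfolding oX_def F_def by (rule op_le_frob)
    then have "oX^2 \<le> F^2" using oX_nn by (rule power_mono)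
    then have "oX^2 * F^2 \<le> F^2 * F^2" by (rule mult_right_mono) simp
    then have "oX^2 * F^2 * oE \<le> F^4 * oE"
      by (intro mult_right_mono oE_nn) (simp add: power4_eq_xxxx power2_eq_square mult_ac)
    then show "oX^2 * F^2 * oE / dk \<le> F^4 * oE / dk"
      using dk_pos by (simp add: divide_right_mono)
    show "0 \<le> etaQ * lamK * wK^2 + etaK * lamQ * wQ^2"
      using etaQ etaK lamQ lamK by simp
  qed
  show ?thesis
    unfolding Let_def frob_eq
    using main second
    unfolding D_def Q0_def K0_def s_def oX_def F_def oE_def wQ_def wK_def NQ_def NK_def XP_def dk_def
    by (simp add: scaleR_mult_left scaleR_mult_right mult_ac)
qed

end
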